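(* Let $p,q\in[0,1]$ be real numbers and $R\in\{\mathrm{ML},\mathrm{wML},\mathrm C,\mathrm S\}$. Then every recursive temporal selection process belongs to $\mathscr S^{p,q}_{\mathscr F_R}$.
   Context: $\mathbb N_0=\{0,1,2,\dots\}$. $\mathbb S=\bigcup_{n\in\mathbb N_0}\{0,1\}^n$ is the set of situations, $\square$ the empty sequence, $|s|$ the length, $sx$ concatenation. For $r\in[0,1]$ and $f:\{0,1\}\to\mathbb R$, $E_r(f)=rf(1)+(1-r)f(0)$. A real process is $F:\mathbb S\to\mathbb R$, $\Delta F(s)$ is $x\mapsto F(sx)-F(s)$. A test process is a non-negative real process with $F(\square)=1$. A multiplier process $D$ assigns to each $s$ a function $D(s):\{0,1\}\to[0,\infty)$ and generates the test process $F(\square)=1$, $F(sx)=F(s)D(s)(x)$. Computability: maps from countable effectively encoded domains ($\mathbb N_0$, $\mathbb S$, products with $\{0,1\}$, $\mathbb N_0$) to $\mathbb N_0$, $\mathbb Q$ or $\{0,1\}$ are recursive if Turing-computable; a real map $r$ is lower semicomputable if $r(d)=\lim_nq(d,n)$ for a recursive rational $q$ non-decreasing in $n$. $\mathscr F_{\mathrm{ML}}$: lower semicomputable test processes; $\mathscr F_{\mathrm{wML}}$: test processes generated by lower semicomputable multiplier processes; $\mathscr F_{\mathrm C}=\mathscr F_{\mathrm S}$: positive, rational-valued, recursive test processes. A selection process is a map $S:\mathbb S\to\{0,1\}$; temporal if $S(s)$ depends only on $|s|$ (written $S(n)$). For a real process $F$ and $r\in[0,1]$, $S^r_F$ is the temporal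 selection process with $S^r_F(n)=1$ if $E_r(\Delta F(s))>0$ for some $s$ with $|s|=n$, and $0$ otherwise. For a set $\mathscr F$ of real processes, $\mathscr S^{p,q}_{\mathscr F}=\{S^r_F:F\in\mathscr F,\ r\in\{p,q\}\}$. *)

theory Defs
  imports Complex_Main "HOL-Library.Nat_Bijection"
begin

datatype recf = Zero | Succ | Proj nat | Comp recf "recf list" | Prec recf recf | Mn recf

inductive recfn_eval :: "recf \<Rightarrow> nat list \<Rightarrow> nat \<Rightarrow> bool" where
  zero: "recfn_eval Zero xs 0"
| succ: "recfn_eval Succ [x] (Suc x)"
| proj: "i < length xs \<Longrightarrow> recfn_eval (Proj i) xs (xs ! i)"
| comp: "recfn_eval f ys y \<Longrightarrow> length ys = length gs \<Longrightarrow>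
          (\<forall>i < length gs. recfn_eval (gs ! i) xs (ys ! i)) \<Longrightarrow>
          recfn_eval (Comp f gs) xs y"
| prec0: "recfn_eval f xs y \<Longrightarrow> recfn_eval (Prec f g) (0 # xs) y"
| precS: "recfn_eval (Prec f g) (n # xs) y \<Longrightarrow> recfn_eval g (y # n # xs) z \<Longrightarrow>
          recfn_eval (Prec f g) (Suc n # xs) z"
| mn: "recfn_eval f (n # xs) 0 \<Longrightarrow> (\<forall>m < n. \<exists>y. recfn_eval f (m # xs) (Suc y)) \<Longrightarrow>
          recfn_eval (Mn f) xs n"

definition computable1 :: "(nat \<Rightarrow> nat) \<Rightarrow> bool" where
  "computable1 f \<longleftrightarrow> (\<exists>r. \<forall>x. recfn_eval r [x] (f x))"

text \<open>Situations are finite binary sequences, modelled as bool lists (True = 1, False = 0);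
  the situation s x is s @ [x].  Bijective encoding of situations into nat.\<close>
fun enc_sit :: "bool list \<Rightarrow> nat" where
  "enc_sit [] = 0"
| "enc_sit (b # s) = 2 * enc_sit s + (if b then 2 else 1)"

definition enc_bit :: "bool \<Rightarrow> nat" where
  "enc_bit b = (if b then 1 else 0)"

definition rec_bool_map :: "('a \<Rightarrow> nat) \<Rightarrow> ('a \<Rightarrow> bool) \<Rightarrow> bool" where
  "rec_bool_map code S \<longleftrightarrow> (\<exists>a. computable1 a \<and> (\<forall>d. a (code d) = enc_bit (S d)))"

definition rec_rat_map :: "('a \<Rightarrow> nat) \<Rightarrow> ('a \<Rightarrow> real) \<Rightarrow> bool" where
  "rec_rat_map code q \<longleftrightarrow> (\<exists>a b c. computable1 a \<and> computable1 b \<and> computable1 c \<and>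
     (\<forall>d. q d = (real (a (code d)) - real (b (code d))) / real (Suc (c (code d)))))"

definition lower_semicomputable :: "('a \<Rightarrow> nat) \<Rightarrow> ('a \<Rightarrow> real) \<Rightarrow> bool" where
  "lower_semicomputable code r \<longleftrightarrow> (\<exists>q :: 'a \<times> nat \<Rightarrow> real.
     rec_rat_map (\<lambda>(d, n). prod_encode (code d, n)) q \<and>
     (\<forall>d n. q (d, n) \<le> q (d, Suc n)) \<and>
     (\<forall>d. (\<lambda>n. q (d, n)) \<longlonglongrightarrow> r d))"

definition E :: "real \<Rightarrow> (bool \<Rightarrow> real) \<Rightarrow> real" where
  "E r f = r * f True + (1 - r) * f False"

definition Delta :: "(bool list \<Rightarrow> real) \<Rightarrow> bool list \<Rightarrow> bool \<Rightarrow> real" where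
  "Delta F s = (\<lambda>x. F (s @ [x]) - F s)"

definition test_process :: "(bool list \<Rightarrow> real) \<Rightarrow> bool" where
  "test_process F \<longleftrightarrow> (\<forall>s. F s \<ge> 0) \<and> F [] = 1"

definition generated_by :: "(bool list \<Rightarrow> bool \<Rightarrow> real) \<Rightarrow> (bool list \<Rightarrow> real) \<Rightarrow> bool" where
  "generated_by D F \<longleftrightarrow> F [] = 1 \<and> (\<forall>s x. F (s @ [x]) = F s * D s x)"

definition multiplier_process :: "(bool list \<Rightarrow> bool \<Rightarrow> real) \<Rightarrow> bool" where
  "multiplier_process D \<longleftrightarrow> (\<forall>s x. D s x \<ge> 0)"

datatype randomness = R_ML | R_wML | R_C | R_S

definition F_ML :: "(bool list \<Rightarrow> real) set" where
  "F_ML = {F. test_process F \<and> lower_semicomputable enc_sit F}"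

definition F_wML :: "(bool list \<Rightarrow> real) set" where
  "F_wML = {F. test_process F \<and> (\<exists>D. multiplier_process D \<and>
      lower_semicomputable (\<lambda>(s, x). prod_encode (enc_sit s, enc_bit x)) (\<lambda>(s, x). D s x) \<and>
      generated_by D F)}"

definition F_C :: "(bool list \<Rightarrow> real) set" where
  "F_C = {F. test_process F \<and> (\<forall>s. F s > 0) \<and> (\<forall>s. F s \<in> \<rat>) \<and> rec_rat_map enc_sit F}"

fun F_class :: "randomness \<Rightarrow> (bool list \<Rightarrow> real) set" where
  "F_class R_ML = F_ML"
| "F_class R_wML = F_wML"
| "F_class R_C = F_C"
| "F_class R_S = F_C"

definition temporal :: "(bool list \<Rightarrow> bool) \<Rightarrow> bool" where
  "temporal S \<longleftrightarrow> (\<forall>s t. length s = length t \<longrightarrow> S s = S t)"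

text \<open>S^r_F, as a map on situations (it is temporal by construction).\<close>
definition sel_proc :: "real \<Rightarrow> (bool list \<Rightarrow> real) \<Rightarrow> bool list \<Rightarrow> bool" where
  "sel_proc r F s \<longleftrightarrow> (\<exists>t. length t = length s \<and> E r (Delta F t) > 0)"

definition sel_class :: "real \<Rightarrow> real \<Rightarrow> (bool list \<Rightarrow> real) set \<Rightarrow> (bool list \<Rightarrow> bool) set" where
  "sel_class p q FF = {sel_proc r F | r F. F \<in> FF \<and> r \<in> {p, q}}"

end

theory Submission
  imports Defs
begin

definition rc :: "nat \<Rightarrow> (nat list \<Rightarrow> nat) \<Rightarrow> bool" where
  "rc k f \<longleftrightarrow> (\<exists>r. \<forall>xs. length xs = k \<longrightarrow> recfn_eval r xs (f xs))"

lemma rc_cong: assumes "rc k f" "\<And>xs. length xs = k \<Longrightarrow> f xs = g xs" shows "rc k g"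
proof -
  obtain r where r: "\<forall>xs. length xs = k \<longrightarrow> recfn_eval r xs (f xs)" using assms(1) unfolding rc_def by blast
  have "\<forall>xs. length xs = k \<longrightarrow> recfn_eval r xs (g xs)"
  proof (intro allI impI)
    fix xs :: "nat list" assume l: "length xs = k"
    then have "recfn_eval r xs (f xs)" using r by simp
    then show "recfn_eval r xs (g xs)" using assms(2)[OF l] by simp
  qed
  then show ?thesis unfolding rc_def by blast
qed

lemma rc_zero: "rc k (\<lambda>_. 0)"
  unfolding rc_def by (rule exI[of _ Zero]) (simp add: recfn_eval.zero)

lemma rc_proj: "i < k \<Longrightarrow> rc k (\<lambda>xs. xs ! i)"
  unfolding rc_def by (rule exI[of _ "Proj i"]) (simp add: recfn_eval.proj)

lemma len1: "length xs = 1 \<Longrightarrow> \<exists>a. xs = [a]"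
  by (simp add: length_Suc_conv)
lemma len2: "length xs = 2 \<Longrightarrow> \<exists>a b. xs = [a, b]"
  by (auto simp: length_Suc_conv numeral_2_eq_2)

lemma rc_succ1: "rc 1 (\<lambda>xs. Suc (xs!0))"
  unfolding rc_def
proof (intro exI allI impI)
  fix xs :: "nat list" assume "length xs = 1"
  then obtain a where "xs = [a]" using len1 by blast
  then show "recfn_eval Succ xs (Suc (xs!0))" using recfn_eval.succ by simp
qed

lemma rc_comp1: assumes "rc 1 f" "rc k g" shows "rc k (\<lambda>xs. f [g xs])"
proof -
  obtain rf where rf: "\<forall>xs. length xs = 1 \<longrightarrow> recfn_eval rf xs (f xs)" using assms(1) rc_def by blast
  obtain rg where rg: "\<forall>xs. length xs = k \<longrightarrow> recfn_eval rg xs (g xs)" using assms(2) rc_def by blast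
  show ?thesis unfolding rc_def
  proof (intro exI allI impI)
    fix xs :: "nat list" assume l: "length xs = k"
    show "recfn_eval (Comp rf [rg]) xs (f [g xs])"
      by (rule recfn_eval.comp[where ys="[g xs]"]) (use rf rg l in auto)
  qed
qed

lemma rc_comp2: assumes "rc 2 f" "rc k g" "rc k h" shows "rc k (\<lambda>xs. f [g xs, h xs])"
proof -
  obtain rf where rf: "\<forall>xs. length xs = 2 \<longrightarrow> recfn_eval rf xs (f xs)" using assms(1) rc_def by blast
  obtain rg where rg: "\<forall>xs. length xs = k \<longrightarrow> recfn_eval rg xs (g xs)" using assms(2) rc_def by blast
  obtain rh where rh: "\<forall>xs. length xs = k \<longrightarrow> recfn_eval rh xs (h xs)" using assms(3) rc_def by blast
  show ?thesis unfolding rc_def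
  proof (intro exI allI impI)
    fix xs :: "nat list" assume l: "length xs = k"
    have "\<forall>i<2. recfn_eval ([rg, rh] ! i) xs ([g xs, h xs] ! i)"
    proof (intro allI impI)
      fix i :: nat assume "i < 2"
      then have "i = 0 \<or> i = 1" by arith
      then show "recfn_eval ([rg, rh] ! i) xs ([g xs, h xs] ! i)" using rg rh l by auto
    qed
    then show "recfn_eval (Comp rf [rg, rh]) xs (f [g xs, h xs])"
      by (intro recfn_eval.comp[where ys="[g xs, h xs]"]) (use rf in auto)
  qed
qed

lemma rc_prec:
  assumes "rc k f" "rc k2 g" "k2 = Suc (Suc k)" "k1 = Suc k"
  shows "rc k1 (\<lambda>xs. rec_nat (f (tl xs)) (\<lambda>n y. g (y # n # tl xs)) (hd xs))"
proof -
  obtain rf where rf: "\<forall>xs. length xs = k \<longrightarrow> recfn_eval rf xs (f xs)" using assms(1) rc_def by blast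
  obtain rg where rg: "\<forall>xs. length xs = k2 \<longrightarrow> recfn_eval rg xs (g xs)" using assms(2) rc_def by blast
  have main: "recfn_eval (Prec rf rg) (n # ys) (rec_nat (f ys) (\<lambda>n y. g (y # n # ys)) n)"
    if "length ys = k" for n ys
  proof (induction n)
    case 0
    then show ?case using rf that by (auto intro: recfn_eval.prec0)
  next
    case (Suc n)
    then show ?case using rg that assms(3) by (auto intro: recfn_eval.precS)
  qed
  show ?thesis unfolding rc_def
  proof (intro exI allI impI)
    fix xs :: "nat list" assume l: "length xs = k1"
    then obtain n ys where "xs = n # ys" "length ys = k" using assms(4) by (cases xs) auto
    then show "recfn_eval (Prec rf rg) xs (rec_nat (f (tl xs)) (\<lambda>n y. g (y # n # tl xs)) (hd xs))"
      using main by simp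
  qed
qed

lemma rc_mn:
  assumes "rc k2 f" "k2 = Suc k" "\<And>ys. length ys = k \<Longrightarrow> \<exists>n. f (n # ys) = 0"
  shows "rc k (\<lambda>ys. LEAST n. f (n # ys) = 0)"
proof -
  obtain rf where rf: "\<forall>xs. length xs = k2 \<longrightarrow> recfn_eval rf xs (f xs)" using assms(1) rc_def by blast
  show ?thesis unfolding rc_def
  proof (intro exI allI impI)
    fix ys :: "nat list" assume l: "length ys = k"
    define n where "n = (LEAST n. f (n # ys) = 0)"
    have "f (n # ys) = 0" unfolding n_def using assms(3)[OF l] by (rule LeastI_ex)
    moreover have "\<forall>m<n. \<exists>y. recfn_eval rf (m # ys) (Suc y)"
    proof (intro allI impI)
      fix m assume "m < n"
      then have "f (m # ys) \<noteq> 0" unfolding n_def by (rule not_less_Least)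
      then have "f (m # ys) = Suc (f (m # ys) - 1)" by simp
      then show "\<exists>y. recfn_eval rf (m # ys) (Suc y)" using rf l assms(2) by (metis length_Cons)
    qed
    moreover have "length (n # ys) = k2" using l assms(2) by simp
    ultimately have "recfn_eval rf (n # ys) 0" "\<forall>m<n. \<exists>y. recfn_eval rf (m # ys) (Suc y)"
      using rf by metis+
    then show "recfn_eval (Mn rf) ys (LEAST n. f (n # ys) = 0)"
      unfolding n_def[symmetric] by (rule recfn_eval.mn)
  qed
qed

lemma rc_Suc: "rc k g \<Longrightarrow> rc k (\<lambda>xs. Suc (g xs))"
  using rc_comp1[OF rc_succ1] by simp

lemma rc_const: "rc k (\<lambda>_. c)"
  by (induction c) (auto intro: rc_zero rc_Suc)

lemma add2: "rc 2 (\<lambda>xs. xs!0 + xs!1)"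
proof (rule rc_cong[OF rc_prec[OF rc_proj[of 0 1] rc_Suc[OF rc_proj[of 0 3]]]])
  fix xs :: "nat list" assume "length xs = 2"
  then obtain u v where e: "xs = [u, v]" using len2 by blast
  have "\<And>a. rec_nat b (\<lambda>n y. Suc y) a = a + b" for b by (induct_tac a) auto
  then show "rec_nat ((tl xs)!0) (\<lambda>n y. Suc ((y # n # tl xs)!0)) (hd xs) = xs!0 + xs!1"
    by (simp add: e)
qed auto

lemma rc_add: "rc k a \<Longrightarrow> rc k b \<Longrightarrow> rc k (\<lambda>xs. a xs + b xs)"
  using rc_comp2[OF add2] by simp

lemma mult2: "rc 2 (\<lambda>xs. xs!0 * xs!1)"
proof (rule rc_cong[OF rc_prec[OF rc_zero[of 1] rc_add[OF rc_proj[of 0 3] rc_proj[of 2 3]]]])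
  fix xs :: "nat list" assume "length xs = 2"
  then obtain u v where e: "xs = [u, v]" using len2 by blast
  have "\<And>a. rec_nat 0 (\<lambda>n y. y + b) a = a * b" for b by (induct_tac a) auto
  then show "rec_nat 0 (\<lambda>n y. (y # n # tl xs)!0 + (y # n # tl xs)!2) (hd xs) = xs!0 * xs!1"
    unfolding e by (simp add: numeral_2_eq_2)
qed auto

lemma rc_mult: "rc k a \<Longrightarrow> rc k b \<Longrightarrow> rc k (\<lambda>xs. a xs * b xs)"
  using rc_comp2[OF mult2] by simp

lemma pred1: "rc 1 (\<lambda>xs. xs!0 - 1)"
proof (rule rc_cong[OF rc_prec[OF rc_zero[of 0] rc_proj[of 1 2]]])
  fix xs :: "nat list" assume "length xs = 1"
  then obtain u where e: "xs = [u]" using len1 by blast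
  have "\<And>a. rec_nat 0 (\<lambda>n y. n) a = a - 1" by (case_tac a) auto
  then show "rec_nat 0 (\<lambda>n y. (y # n # tl xs)!1) (hd xs) = xs!0 - 1"
    by (simp add: e)
qed auto

lemma monus2: "rc 2 (\<lambda>xs. xs!1 - xs!0)"
proof (rule rc_cong[OF rc_prec[OF rc_proj[of 0 1] rc_comp1[OF pred1 rc_proj[of 0 3]]]])
  fix xs :: "nat list" assume "length xs = 2"
  then obtain a b where e: "xs = [a, b]" using len2 by blast
  have r: "\<And>a. rec_nat b (\<lambda>n y. y - 1) a = b - a" for b by (induct_tac a) auto
  show "rec_nat ((tl xs)!0) (\<lambda>n y. [(y # n # tl xs)!0] ! 0 - 1) (hd xs) = xs!1 - xs!0"
    using r by (simp add: e)
qed auto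

lemma rc_minus: "rc k a \<Longrightarrow> rc k b \<Longrightarrow> rc k (\<lambda>xs. a xs - b xs)"
  using rc_comp2[OF monus2, of k b a] by simp

lemma pow2: "rc 1 (\<lambda>xs. 2 ^ (xs!0))"
proof (rule rc_cong[OF rc_prec[OF rc_const[of 0 1] rc_add[OF rc_proj[of 0 2] rc_proj[of 0 2]]]])
  fix xs :: "nat list" assume "length xs = 1"
  then obtain u where e: "xs = [u]" using len1 by blast
  have "\<And>a. rec_nat 1 (\<lambda>n y. y + y) a = (2::nat) ^ a" by (induct_tac a) auto
  then show "rec_nat 1 (\<lambda>n y. (y # n # tl xs)!0 + (y # n # tl xs)!0) (hd xs) = 2 ^ (xs!0)"
    by (simp add: e)
qed auto

lemma tri1: "rc 1 (\<lambda>xs. triangle (xs!0))"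
proof (rule rc_cong[OF rc_prec[OF rc_zero[of 0] rc_add[OF rc_proj[of 0 2] rc_Suc[OF rc_proj[of 1 2]]]]])
  fix xs :: "nat list" assume "length xs = 1"
  then obtain u where e: "xs = [u]" using len1 by blast
  have "\<And>a. rec_nat 0 (\<lambda>n y. y + Suc n) a = triangle a" by (induct_tac a) auto
  then show "rec_nat 0 (\<lambda>n y. (y # n # tl xs)!0 + Suc ((y # n # tl xs)!1)) (hd xs) = triangle (xs!0)"
    by (simp add: e)
qed auto

lemma rc_un: "rc 1 (\<lambda>xs. f (xs!0)) \<Longrightarrow> rc k a \<Longrightarrow> rc k (\<lambda>xs. f (a xs))"
  using rc_comp1[of "\<lambda>xs. f (xs!0)"] by simp

lemma computable1_rc: "computable1 f \<Longrightarrow> rc 1 (\<lambda>xs. f (xs!0))"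
  unfolding computable1_def rc_def
proof (elim exE, intro exI allI impI)
  fix r xs assume r: "\<forall>x. recfn_eval r [x] (f x)" and "length (xs::nat list) = 1"
  then obtain a where "xs = [a]" using len1 by blast
  then show "recfn_eval r xs (f (xs!0))" using r by simp
qed

lemma p01: "rc 1 (\<lambda>xs. xs!0)" by (rule rc_proj) simp

lemma rc_computable1: "rc 1 (\<lambda>xs. f (xs!0)) \<Longrightarrow> computable1 f"
  unfolding computable1_def rc_def by (metis length_Cons list.size(3) nth_Cons_0 One_nat_def)


definition lenc :: "nat \<Rightarrow> nat" where
  "lenc m = (LEAST n. (m + 2) - 2 ^ Suc n = 0)"

definition pfst :: "nat \<Rightarrow> nat" where
  "pfst k = k - triangle (LEAST t. Suc k - triangle (Suc t) = 0)"

lemma rc_lenc: "rc 1 (\<lambda>xs. lenc (xs!0))"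
proof -
  have f: "rc 2 (\<lambda>xs. (xs!1 + 2) - 2 ^ Suc (xs!0))"
    by (rule rc_cong[OF rc_minus[OF rc_add[OF rc_proj[of 1 2, simplified] rc_const[of 2 2]]
         rc_comp1[OF pow2 rc_Suc[OF rc_proj[of 0 2, simplified]]]]]) simp
  have "rc 1 (\<lambda>ys. LEAST n. ((n # ys)!1 + 2) - 2 ^ Suc ((n # ys)!0) = 0)"
  proof (rule rc_mn[OF f])
    fix ys :: "nat list"
    have "(ys!0 + 2) - 2 ^ Suc (Suc (ys!0)) = 0"
      using less_exp[of "Suc (Suc (ys!0))"] by simp
    then show "\<exists>n. ((n # ys)!1 + 2) - 2 ^ Suc ((n # ys)!0) = 0"
      by (intro exI[of _ "Suc (ys!0)"]) simp
  qed simp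
  then show ?thesis unfolding lenc_def by simp
qed

lemma rc_pfst: "rc 1 (\<lambda>xs. pfst (xs!0))"
proof -
  have f: "rc 2 (\<lambda>xs. Suc (xs!1) - triangle (Suc (xs!0)))"
    by (rule rc_cong[OF rc_minus[OF rc_Suc[OF rc_proj[of 1 2, simplified]]
         rc_comp1[OF tri1 rc_Suc[OF rc_proj[of 0 2, simplified]]]]]) simp
  have "rc 1 (\<lambda>ys. LEAST n. Suc ((n # ys)!1) - triangle (Suc ((n # ys)!0)) = 0)"
  proof (rule rc_mn[OF f])
    fix ys :: "nat list"
    have "Suc (ys!0) - triangle (Suc (ys!0)) = 0" by simp
    then show "\<exists>n. Suc ((n # ys)!1) - triangle (Suc ((n # ys)!0)) = 0"
      by (intro exI[of _ "ys!0"]) simp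
  qed simp
  then have g: "rc 1 (\<lambda>ys. LEAST n. Suc (ys!0) - triangle (Suc n) = 0)" by simp
  have "rc 1 (\<lambda>xs. xs!0 - triangle (LEAST n. Suc (xs!0) - triangle (Suc n) = 0))"
    by (rule rc_cong[OF rc_minus[OF p01 rc_comp1[OF tri1 g]]]) simp
  then show ?thesis unfolding pfst_def by simp
qed

lemma pfst_enc: "pfst (prod_encode (a, b)) = a"
proof -
  have "(LEAST t. Suc (triangle (a + b) + a) - triangle (Suc t) = 0) = a + b"
  proof (rule Least_equality)
    show "Suc (triangle (a + b) + a) - triangle (Suc (a + b)) = 0" by simp
    fix y assume "Suc (triangle (a + b) + a) - triangle (Suc y) = 0"
    then have "triangle (a + b) + a < triangle (Suc y)" by simp
    show "a + b \<le> y"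
    proof (rule ccontr)
      assume "\<not> a + b \<le> y"
      then have "Suc y \<le> a + b" by simp
      then have "triangle (Suc y) \<le> triangle (a + b)"
        by (metis triangle_def div_le_mono mult_le_mono lessI Suc_le_mono)
      with \<open>triangle (a + b) + a < triangle (Suc y)\<close> show False by simp
    qed
  qed
  then show ?thesis unfolding pfst_def prod_encode_def by simp
qed

lemma enc_bounds: "2 ^ length s \<le> enc_sit s + 1 \<and> enc_sit s + 2 \<le> 2 ^ Suc (length s)"
  by (induction s) auto

lemma lenc_enc: "lenc (enc_sit s) = length s"
  unfolding lenc_def
proof (rule Least_equality)
  show "enc_sit s + 2 - 2 ^ Suc (length s) = 0" using enc_bounds[of s] by simp
  fix y assume a: "enc_sit s + 2 - 2 ^ Suc y = 0"
  show "length s \<le> y"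
  proof (rule ccontr)
    assume "\<not> length s \<le> y"
    then have "Suc y \<le> length s" by simp
    then have "(2::nat) ^ Suc y \<le> 2 ^ length s" by (rule power_increasing) simp
    with a enc_bounds[of s] show False by simp
  qed
qed

lemma enc_repl: "enc_sit (replicate n False) = 2 ^ n - 1"
proof (induction n)
  case (Suc n)
  have "(1::nat) \<le> 2 ^ n" by simp
  then show ?case by (simp add: Suc.IH) (use \<open>1 \<le> 2 ^ n\<close> in linarith)
qed simp

lemma rc_G: assumes c: "computable1 a0"
  shows "rc 1 (\<lambda>xs. rec_nat 1 (\<lambda>n y. y * Suc (a0 (2 ^ n - 1))) (xs!0))"
proof -
  have a: "rc 1 (\<lambda>xs. a0 (xs!0))" by (rule computable1_rc[OF c])
  have g: "rc 2 (\<lambda>zs. zs!0 * Suc (a0 (2 ^ (zs!1) - 1)))"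
    by (rule rc_cong[OF rc_mult[OF rc_proj[of 0 2, simplified] rc_Suc[OF rc_comp1[OF a
          rc_minus[OF rc_comp1[OF pow2 rc_proj[of 1 2, simplified]] rc_const[of 2 1]]]]]]) simp
  show ?thesis
  proof (rule rc_cong[OF rc_prec[OF rc_const[of 0 1] g]])
    fix xs :: "nat list" assume "length xs = 1"
    then obtain a where e: "xs = [a]" using len1 by blast
    show "rec_nat 1 (\<lambda>n y. (y # n # tl xs)!0 * Suc (a0 (2 ^ ((y # n # tl xs)!1) - 1))) (hd xs) =
       rec_nat 1 (\<lambda>n y. y * Suc (a0 (2 ^ n - 1))) (xs!0)"
      by (simp add: e)
  qed simp_all
qed


lemma computable1_zero: "computable1 (\<lambda>_. 0)"
  using rc_computable1[of "\<lambda>_. 0"] rc_zero by simp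

lemma rat_map_intro:
  assumes "computable1 a" "\<And>d. q d = real (a (code d))"
  shows "rec_rat_map code q"
  unfolding rec_rat_map_def
  by (rule exI[of _ a], rule exI[of _ "\<lambda>_. 0"], rule exI[of _ "\<lambda>_. 0"])
     (simp add: assms computable1_zero)

theorem proposition28:
  fixes p q :: real and R :: randomness and S :: "bool list \<Rightarrow> bool"
  assumes "p \<in> {0..1}" and "q \<in> {0..1}"
    and "temporal S" and "rec_bool_map enc_sit S"
  shows "S \<in> sel_class p q (F_class R)"
proof -
  obtain a0 where ca: "computable1 a0" and ha: "\<And>d. a0 (enc_sit d) = enc_bit (S d)"
    using assms(4) unfolding rec_bool_map_def by blast
  define sb where "sb n = S (replicate n False)" for n
  have Stemp: "S s = sb (length s)" for s
    using assms(3) unfolding temporal_def sb_def by (metis length_replicate)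
  have a0r: "a0 (2 ^ n - 1) = (if sb n then 1 else 0)" for n
    using ha[of "replicate n False"] unfolding enc_repl sb_def enc_bit_def by simp
  define G where "G = rec_nat (1::nat) (\<lambda>n y. y * Suc (a0 (2 ^ n - 1)))"
  have GS: "G (Suc n) = G n * (if sb n then 2 else 1)" for n
    unfolding G_def using a0r[of n] by simp
  have Gpos: "G n > 0" for n
    by (induction n) (simp_all add: G_def[symmetric] GS, simp add: G_def)
  define F where "F s = real (G (length s))" for s :: "bool list"
  define D where "D s x = (if sb (length s) then 2 else 1 :: real)" for s :: "bool list" and x :: bool
  have FD: "F (s @ [x]) = F s * D s x" for s x
    unfolding F_def D_def by (simp add: GS)
  have Fpos: "F s > 0" for s unfolding F_def using Gpos by simp
  have F0: "F [] = 1" unfolding F_def G_def by simp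
  have test: "test_process F" unfolding test_process_def using Fpos F0 by (simp add: less_imp_le)
  have sel: "sel_proc p F = S"
  proof
    fix s :: "bool list"
    have Ev: "E p (Delta F t) = F t * (D t False - 1)" for t
      unfolding E_def Delta_def FD D_def by (simp add: algebra_simps)
    have "E p (Delta F t) > 0 \<longleftrightarrow> sb (length t)" for t
      unfolding Ev using Fpos[of t] by (simp add: D_def)
    then show "sel_proc p F s = S s"
      unfolding sel_proc_def Stemp[of s] by (metis length_replicate)
  qed
  have cG: "rc 1 (\<lambda>xs. G (xs!0))"
    unfolding G_def by (rule rc_G[OF ca])
  have cF: "computable1 (\<lambda>m. G (lenc m))"
    by (rule rc_computable1) (rule rc_cong[OF rc_comp1[OF cG rc_lenc]], simp)
  have cFp: "computable1 (\<lambda>m. G (lenc (pfst m)))"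
    by (rule rc_computable1) (rule rc_cong[OF rc_comp1[OF cG rc_comp1[OF rc_lenc rc_pfst]]], simp)
  have a: "rc 1 (\<lambda>xs. a0 (xs!0))" by (rule computable1_rc[OF ca])
  have cD: "computable1 (\<lambda>m. Suc (a0 (2 ^ lenc (pfst (pfst m)) - 1)))"
    by (rule rc_computable1)
       (rule rc_cong[OF rc_Suc[OF rc_comp1[OF a rc_minus[OF rc_comp1[OF pow2
         rc_comp1[OF rc_lenc rc_comp1[OF rc_pfst rc_pfst]]] rc_const[of 1 1]]]]], simp)
  have FC: "F \<in> F_C"
    unfolding F_C_def
  proof (intro CollectI conjI allI test Fpos)
    show "F s \<in> \<rat>" for s unfolding F_def by simp
    show "rec_rat_map enc_sit F"
      by (rule rat_map_intro[OF cF]) (simp add: F_def lenc_enc)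
  qed
  have FML: "F \<in> F_ML"
    unfolding F_ML_def lower_semicomputable_def
  proof (intro CollectI conjI test exI[of _ "\<lambda>(d, n). F d"] allI)
    show "rec_rat_map (\<lambda>(d, n). prod_encode (enc_sit d, n)) (\<lambda>(d, n). F d)"
    proof (rule rat_map_intro[OF cFp])
      fix dn :: "bool list \<times> nat"
      obtain d n where "dn = (d, n)" by (cases dn)
      then show "(case dn of (d, n) \<Rightarrow> F d) = real (G (lenc (pfst (case dn of (d, n) \<Rightarrow> prod_encode (enc_sit d, n)))))"
        by (simp add: F_def pfst_enc lenc_enc)
    qed
  qed simp_all
  have FwML: "F \<in> F_wML"
    unfolding F_wML_def
  proof (intro CollectI conjI test exI[of _ D])
    show "multiplier_process D" unfolding multiplier_process_def D_def by simp
    show "generated_by D F" unfolding generated_by_def using F0 FD by simp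
    show "lower_semicomputable (\<lambda>(s, x). prod_encode (enc_sit s, enc_bit x)) (\<lambda>(s, x). D s x)"
      unfolding lower_semicomputable_def
    proof (intro exI[of _ "\<lambda>(d, n). (case d of (s, x) \<Rightarrow> D s x)"] conjI allI)
      show "rec_rat_map (\<lambda>(d, n). prod_encode ((case d of (s, x) \<Rightarrow> prod_encode (enc_sit s, enc_bit x)), n))
              (\<lambda>(d, n). (case d of (s, x) \<Rightarrow> D s x))"
      proof (rule rat_map_intro[OF cD])
        fix dn :: "(bool list \<times> bool) \<times> nat"
        obtain s x n where "dn = ((s, x), n)" by (cases dn) auto
        then show "(case dn of (d, n) \<Rightarrow> (case d of (s, x) \<Rightarrow> D s x)) =
          real (Suc (a0 (2 ^ lenc (pfst (pfst ((case dn of (d, n) \<Rightarrow> prod_encode ((case d of (s, x) \<Rightarrow> prod_encode (enc_sit s, enc_bit x)), n))))) - 1)))"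
          using a0r[of "length s"] by (simp add: D_def pfst_enc lenc_enc)
      qed
    qed simp_all
  qed
  have "F \<in> F_class R" using FC FML FwML by (cases R) simp_all
  then show ?thesis unfolding sel_class_def using sel by blast
qed

end
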